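(* Let $\mathcal{K}$ be a continuous unitary representation of $\overline{\mathfrak{S}}_\infty$ in a Hilbert space $\mathcal{H}$, let $n\ge 0$ be an integer, and let $P_n$ be the weak-operator limit of $\mathcal{K}({}^n\sigma_m)$ as $m\to\infty$. Then $\mathcal{K}(s)P_n=P_n$ for every $s\in\mathfrak{S}(n,\infty)$.
   Context: $\overline{\mathfrak{S}}_\infty$ is the group of all bijections of $\mathbb{N}$, with the Polish topology in which the subgroups $\mathfrak{S}(n,\infty)=\{s: s(k)=k \text{ for } k=1,\dots,n\}$ form a fundamental system of neighborhoods of the identity; continuity of $\mathcal{K}$ means $\lim_{k\to\infty}\sup_{s\in\mathfrak{S}(k,\infty)}\|\mathcal{K}(s)\eta-\eta\|=0$ for each $\eta\in\mathcal{H}$. $(k\;j)$ denotes the transposition of $k$ and $j$, and ${}^n\sigma_m=(n+1\;\;n+m+1)(n+2\;\;n+m+2)\cdots(n+m\;\;n+2m)$. The weak-operator limit $P_n=\lim_{m\to\infty}\mathcal{K}({}^n\sigma_m)$ exists. *)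

theory Defs
  imports "HOL-Analysis.Analysis"
begin

text \<open>Indexing convention: the paper's \<open>\<nat> = {1,2,...}\<close> is identified with
  Isabelle's \<open>nat = {0,1,...}\<close> via \<open>k \<mapsto> k-1\<close>.\<close>

definition Sfix :: "nat \<Rightarrow> (nat \<Rightarrow> nat) set" where
  "Sfix n = {s. bij s \<and> (\<forall>k<n. s k = k)}"

text \<open>\<open>sigma n m\<close> is the paper's \<open>\<^sup>n\<sigma>\<^sub>m\<close>, the product of the transpositions
  \<open>(n+i  n+m+i)\<close>, \<open>i = 1..m\<close> (0-based here: \<open>n+i \<leftrightarrow> n+m+i\<close>, \<open>i < m\<close>).\<close>
definition sigma :: "nat \<Rightarrow> nat \<Rightarrow> nat \<Rightarrow> nat" where
  "sigma n m k = (if n \<le> k \<and> k < n + m then k + m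
                  else if n + m \<le> k \<and> k < n + 2 * m then k - m else k)"

definition unitary_op :: "('h::real_normed_vector \<Rightarrow> 'h) \<Rightarrow> bool" where
  "unitary_op U \<longleftrightarrow> bounded_linear U \<and> surj U \<and> (\<forall>x. norm (U x) = norm x)"

definition unitary_rep :: "((nat \<Rightarrow> nat) \<Rightarrow> 'h::real_normed_vector \<Rightarrow> 'h) \<Rightarrow> bool" where
  "unitary_rep K \<longleftrightarrow> (\<forall>s. bij s \<longrightarrow> unitary_op (K s))
     \<and> K id = id \<and> (\<forall>s t. bij s \<longrightarrow> bij t \<longrightarrow> K (s \<circ> t) = K s \<circ> K t)"

definition continuous_rep :: "((nat \<Rightarrow> nat) \<Rightarrow> 'h::real_normed_vector \<Rightarrow> 'h) \<Rightarrow> bool" where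
  "continuous_rep K \<longleftrightarrow>
     (\<forall>\<eta>. (\<lambda>k. SUP s\<in>Sfix k. norm (K s \<eta> - \<eta>)) \<longlonglongrightarrow> 0)"

end

theory Submission
  imports Defs
begin

definition sw :: "nat \<Rightarrow> nat \<Rightarrow> nat \<Rightarrow> nat" where
  "sw a b k = (if k = a then b else if k = b then a else k)"

lemma sw_bij: "bij (sw a b)"
  by (rule o_bij[of "sw a b"]) (auto simp: sw_def fun_eq_iff)

lemma sigma_invol: "sigma n m \<circ> sigma n m = id"
  by (auto simp: sigma_def fun_eq_iff)

lemma sigma_bij: "bij (sigma n m)"
  by (rule o_bij[OF sigma_invol sigma_invol])

lemma finite_approx:
  fixes s :: "nat \<Rightarrow> nat" and N :: nat
  shows "bij s \<Longrightarrow> \<exists>u. bij u \<and> (\<forall>k<N. u k = s k) \<and> (\<exists>B. \<forall>k\<ge>B. u k = k)"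
proof (induction N)
  case 0
  show ?case using bij_id by (intro exI[of _ id]) (simp add: id_def)
next
  case (Suc N)
  then obtain u B where u: "bij u" "\<forall>k<N. u k = s k" "\<forall>k\<ge>B. u k = k" by blast
  define u' where "u' = sw (u N) (s N) \<circ> u"
  have "bij u'" unfolding u'_def using u(1) sw_bij bij_comp by blast
  moreover have "\<forall>k<Suc N. u' k = s k"
  proof (intro allI impI)
    fix k assume k: "k < Suc N"
    show "u' k = s k"
    proof (cases "k = N")
      case True then show ?thesis by (simp add: u'_def sw_def)
    next
      case False
      then have "k < N" using k by simp
      then have "u k = s k" using u by simp
      moreover have "s k \<noteq> s N" using Suc.prems \<open>k < N\<close> bij_is_inj inj_eq by fastforce
      moreover have "u k \<noteq> u N" using u(1) \<open>k < N\<close> bij_is_inj inj_eq by fastforce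
      ultimately show ?thesis by (simp add: u'_def sw_def)
    qed
  qed
  moreover have "\<forall>k\<ge>max B (max (u N + 1) (s N + 1)). u' k = k"
    using u(3) by (auto simp: u'_def sw_def)
  ultimately show ?case by blast
qed

lemma inner_pres:
  assumes "unitary_op U" shows "inner (U a) (U b) = inner a b"
proof -
  have l: "linear U" using assms unfolding unitary_op_def bounded_linear_def by blast
  have n: "\<And>x. norm (U x) = norm x" using assms unfolding unitary_op_def by blast
  show ?thesis
    by (simp add: dot_norm[of "U a"] dot_norm[of a] linear_add[OF l, symmetric] n)
qed

lemma adj:
  assumes "unitary_rep K" "bij u"
  shows "inner (K u a) b = inner a (K (inv u) b)"
proof -
  have bi: "bij (inv u)" using assms(2) bij_imp_bij_inv by blast
  have "u \<circ> inv u = id" using assms(2) bij_is_surj surj_iff by blast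
  then have "K u \<circ> K (inv u) = id" using assms bi unfolding unitary_rep_def by metis
  then have "b = K u (K (inv u) b)" by (metis comp_apply id_apply)
  then have "inner (K u a) b = inner (K u a) (K u (K (inv u) b))" by simp
  also have "\<dots> = inner a (K (inv u) b)"
    using inner_pres assms unfolding unitary_rep_def by blast
  finally show ?thesis .
qed

lemma sup_bound:
  fixes K :: "(nat \<Rightarrow> nat) \<Rightarrow> 'h::real_inner \<Rightarrow> 'h"
  assumes "unitary_rep K" "w \<in> Sfix k"
  shows "norm (K w x - x) \<le> (SUP s\<in>Sfix k. norm (K s x - x))"
proof (rule cSUP_upper[OF assms(2)])
  show "bdd_above ((\<lambda>s. norm (K s x - x)) ` Sfix k)"
  proof (rule bdd_aboveI2)
    fix s assume "s \<in> Sfix k"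
    then have "bij s" by (simp add: Sfix_def)
    then have "norm (K s x) = norm x" using assms(1) unfolding unitary_rep_def unitary_op_def by blast
    then show "norm (K s x - x) \<le> 2 * norm x" using norm_triangle_ineq4[of "K s x" x] by simp
  qed
qed

lemma sup_nonneg_tendsto:
  fixes K :: "(nat \<Rightarrow> nat) \<Rightarrow> 'h::real_inner \<Rightarrow> 'h"
  assumes "continuous_rep K"
  shows "(\<lambda>k. SUP s\<in>Sfix k. norm (K s x - x)) \<longlonglongrightarrow> 0"
  using assms unfolding continuous_rep_def by blast

lemma fin_case:
  fixes K :: "(nat \<Rightarrow> nat) \<Rightarrow> 'h::{real_inner, complete_space} \<Rightarrow> 'h"
    and P :: "'h \<Rightarrow> 'h" and n :: nat
  assumes K: "unitary_rep K" and C: "continuous_rep K"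
    and L: "\<forall>x y. (\<lambda>m. inner (K (sigma n m) x) y) \<longlonglongrightarrow> inner (P x) y"
    and u: "u \<in> Sfix n" and B: "\<forall>k\<ge>B. u k = k"
  shows "K u (P x) = P x"
proof -
  have ub: "bij u" using u by (simp add: Sfix_def)
  have ufix: "\<forall>k<n. u k = k" using u by (simp add: Sfix_def)
  define f where "f = (\<lambda>k. SUP s\<in>Sfix k. norm (K s x - x))"
  have f0: "f \<longlonglongrightarrow> 0" unfolding f_def using sup_nonneg_tendsto[OF C] .
  have "\<forall>y. inner (K u (P x) - P x) y = 0"
  proof
    fix y
    have lim1: "(\<lambda>m. inner (K (sigma n m) x) (K (inv u) y)) \<longlonglongrightarrow> inner (K u (P x)) y"
      using L adj[OF K ub] by simp
    have eq: "\<And>m. inner (K (sigma n m) x) (K (inv u) y) = inner (K u (K (sigma n m) x)) y"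
      using adj[OF K ub] by simp
    have "(\<lambda>m. inner (K u (K (sigma n m) x)) y - inner (K (sigma n m) x) y) \<longlonglongrightarrow> 0"
    proof (rule Lim_null_comparison)
      show "(\<lambda>m. f (m + n) * norm y) \<longlonglongrightarrow> 0"
        using tendsto_mult_left_zero[OF LIMSEQ_ignore_initial_segment[OF f0, of n]] by simp
      show "\<forall>\<^sub>F m in sequentially. norm (inner (K u (K (sigma n m) x)) y - inner (K (sigma n m) x) y)
               \<le> f (m + n) * norm y"
        unfolding eventually_sequentially
      proof (intro exI[of _ B] allI impI)
        fix m assume mB: "B \<le> m"
        define w where "w = sigma n m \<circ> u \<circ> sigma n m"
        have wb: "bij w" unfolding w_def using ub sigma_bij bij_comp by blast
        have wfix: "\<forall>k<m+n. w k = k"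
        proof (intro allI impI)
          fix k assume k: "k < m + n"
          show "w k = k"
          proof (cases "k < n")
            case True then show ?thesis using ufix by (simp add: w_def sigma_def)
          next
            case False
            then have "sigma n m k = k + m" using k by (simp add: sigma_def)
            moreover have "u (k + m) = k + m" using B mB by simp
            ultimately show ?thesis using False k by (simp add: w_def sigma_def)
          qed
        qed
        have wS: "w \<in> Sfix (m + n)" using wb wfix by (simp add: Sfix_def)
        have "sigma n m \<circ> w = u \<circ> sigma n m"
          unfolding w_def using sigma_invol by (metis comp_assoc id_comp)
        then have "K u \<circ> K (sigma n m) = K (sigma n m) \<circ> K w"
          using K sigma_bij ub wb unfolding unitary_rep_def by metis
        then have e1: "K u (K (sigma n m) x) = K (sigma n m) (K w x)" by (metis comp_apply)
        have uo: "unitary_op (K (sigma n m))" using K sigma_bij unfolding unitary_rep_def by blast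
        then have lin: "linear (K (sigma n m))" unfolding unitary_op_def bounded_linear_def by blast
        have "inner (K u (K (sigma n m) x)) y - inner (K (sigma n m) x) y
              = inner (K (sigma n m) (K w x - x)) y"
          by (simp add: e1 linear_diff[OF lin] inner_diff_left)
        then have "norm (inner (K u (K (sigma n m) x)) y - inner (K (sigma n m) x) y)
              \<le> norm (K (sigma n m) (K w x - x)) * norm y"
          using Cauchy_Schwarz_ineq2 by (metis real_norm_def)
        also have "\<dots> = norm (K w x - x) * norm y" using uo unfolding unitary_op_def by simp
        also have "\<dots> \<le> f (m + n) * norm y"
          unfolding f_def by (rule mult_right_mono[OF sup_bound[OF K wS]]) simp
        finally show "norm (inner (K u (K (sigma n m) x)) y - inner (K (sigma n m) x) y)
              \<le> f (m + n) * norm y" .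
      qed
    qed
    then have "(\<lambda>m. inner (K (sigma n m) x) (K (inv u) y) - inner (K (sigma n m) x) y) \<longlonglongrightarrow> 0"
      using eq by simp
    moreover have "(\<lambda>m. inner (K (sigma n m) x) (K (inv u) y) - inner (K (sigma n m) x) y)
         \<longlonglongrightarrow> inner (K u (P x)) y - inner (P x) y"
      using tendsto_diff[OF lim1 spec[OF spec[OF L]]] by blast
    ultimately have "inner (K u (P x)) y - inner (P x) y = 0" using LIMSEQ_unique by blast
    then show "inner (K u (P x) - P x) y = 0" by (simp add: inner_diff_left)
  qed
  then have "inner (K u (P x) - P x) (K u (P x) - P x) = 0" by blast
  then show ?thesis by simp
qed

theorem lemma3:
  fixes K :: "(nat \<Rightarrow> nat) \<Rightarrow> 'h::{real_inner, complete_space} \<Rightarrow> 'h"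
    and P :: "'h \<Rightarrow> 'h" and n :: nat
  assumes "unitary_rep K" and "continuous_rep K"
    and "\<forall>x y. (\<lambda>m. inner (K (sigma n m) x) y) \<longlonglongrightarrow> inner (P x) y"
  shows "\<forall>s\<in>Sfix n. K s \<circ> P = P"
proof (intro ballI ext)
  fix s x assume sS: "s \<in> Sfix n"
  have sb: "bij s" and sfix: "\<forall>k<n. s k = k" using sS by (auto simp: Sfix_def)
  define f where "f = (\<lambda>k. SUP t\<in>Sfix k. norm (K t (P x) - P x))"
  have f0: "f \<longlonglongrightarrow> 0" unfolding f_def using sup_nonneg_tendsto[OF assms(2)] .
  have "norm (K s (P x) - P x) \<le> e" if e: "e > 0" for e
  proof -
    obtain N0 where N0: "\<forall>N\<ge>N0. f N < e"
      using order_tendstoD(2)[OF f0 e] unfolding eventually_sequentially by blast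
    define N where "N = max N0 n"
    obtain u B where u: "bij u" "\<forall>k<N. u k = s k" "\<forall>k\<ge>B. u k = k"
      using finite_approx[OF sb, of N] by blast
    have uS: "u \<in> Sfix n" using u sfix by (simp add: Sfix_def N_def)
    define v where "v = inv u \<circ> s"
    have vb: "bij v" unfolding v_def using u(1) sb bij_comp bij_imp_bij_inv by blast
    have "\<forall>k<N. v k = k" using u(1,2) by (metis bij_is_inj inv_f_f comp_apply v_def)
    then have vS: "v \<in> Sfix N" using vb by (simp add: Sfix_def)
    have "u \<circ> v = s" unfolding v_def using u(1) surj_iff bij_is_surj by (metis comp_assoc id_comp)
    then have "K s = K u \<circ> K v" using assms(1) u(1) vb unfolding unitary_rep_def by metis
    then have "K s (P x) - P x = K u (K v (P x)) - K u (P x)"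
      using fin_case[OF assms uS] u(3) by simp
    also have "\<dots> = K u (K v (P x) - P x)"
    proof -
      have "linear (K u)" using assms(1) u(1) unfolding unitary_rep_def unitary_op_def bounded_linear_def by blast
      then show ?thesis by (simp add: linear_diff)
    qed
    finally have "norm (K s (P x) - P x) = norm (K v (P x) - P x)"
      using assms(1) u(1) unfolding unitary_rep_def unitary_op_def by simp
    also have "\<dots> \<le> f N" unfolding f_def by (rule sup_bound[OF assms(1) vS])
    also have "\<dots> < e" using N0 by (simp add: N_def)
    finally show ?thesis by simp
  qed
  then have "norm (K s (P x) - P x) = 0"
    by (metis dense_ge norm_ge_zero order_antisym)
  then show "(K s \<circ> P) x = P x" by simp
qed

end
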